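(* Let $y,l,u\in\mathcal{R}(\mathbb{R}^{+},\mathbb{R})$ be such that $l\leq u$, $l_0\leq y_0\leq u_0$, and $\inf_{s\leq t}(u_s-l_s)>0$ for every $t\geq 0$. Let $(\xi,\kappa)=RP_l(y)$. Then the function $\Theta^u_l(\xi)$ has bounded variation.
   Context: A function $f:\mathbb{R}^+=[0,\infty)\to\mathbb{R}$ is regulated if it has a left limit $f_{t^-}$ at every $t>0$ and a right limit $f_{t^+}$ at every $t\geq0$; $\mathcal{R}(\mathbb{R}^{+},\mathbb{R})$ is the set of regulated functions. $a\wedge b=\min(a,b)$, $a\vee b=\max(a,b)$, $a^+=a\vee0$. A function has bounded variation if it has finite total variation on every interval $[0,t]$. One-barrier problem $RP_l(y)$ (for $y,l$ regulated with $y_0\geq l_0$): the unique pair $(\xi,\kappa)$ with $\xi=y+\kappa\geq l$, $\kappa$ non-decreasing, right-continuous, $\kappa_0=0$, and $\int_{[0,\infty[}(\xi_s-l_s)\wedge(\xi_{s^+}-l_{s^+})\,d\kappa_s=0$; explicitly $\kappa_t=-\inf_{s\leq t}\big((y_s-l_s)\wedge(y_{s^+}-l_{s^+})\wedge0\big)$. For $f$ regulated: $\Theta^{u}_{l}(f)_t=\sup_{s\leq t}\Big(\big((f_s-u_s)\vee(f_{s^+}-u_{s^+})\big)^+\wedge\inf_{s\leq r\leq t}\big[\big((f_r-l_r)\wedge(f_{r^+}-l_{r^+})\big)\vee(f_r-u_r)\big]\Big)$. *)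

theory Defs
  imports "HOL-Analysis.Analysis"
begin

text \<open>Functions on R+ = [0,oo) are modelled as real => real; values at negative
  arguments are irrelevant for every notion below.\<close>

definition rlim :: "(real \<Rightarrow> real) \<Rightarrow> real \<Rightarrow> real" where
  "rlim f s = Lim (at_right s) f"

definition regulated :: "(real \<Rightarrow> real) \<Rightarrow> bool" where
  "regulated f \<longleftrightarrow> (\<forall>t>0. \<exists>L. (f \<longlongrightarrow> L) (at_left t)) \<and>
                    (\<forall>t\<ge>0. \<exists>L. (f \<longlongrightarrow> L) (at_right t))"

definition bv_on :: "(real \<Rightarrow> real) \<Rightarrow> real \<Rightarrow> real \<Rightarrow> bool" where
  "bv_on f a b \<longleftrightarrow> (\<exists>M. \<forall>(n::nat) (x::nat \<Rightarrow> real).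
      a \<le> x 0 \<and> x n \<le> b \<and> (\<forall>i<n. x i \<le> x (Suc i)) \<longrightarrow>
      (\<Sum>i<n. \<bar>f (x (Suc i)) - f (x i)\<bar>) \<le> M)"

definition bounded_variation :: "(real \<Rightarrow> real) \<Rightarrow> bool" where
  "bounded_variation f \<longleftrightarrow> (\<forall>t\<ge>0. bv_on f 0 t)"

text \<open>Regulator kappa of the one-barrier problem RP_l(y) (explicit formula) and xi = y + kappa.\<close>
definition RP_kappa :: "(real \<Rightarrow> real) \<Rightarrow> (real \<Rightarrow> real) \<Rightarrow> real \<Rightarrow> real" where
  "RP_kappa l y t = - (INF s\<in>{0..t}. min (min (y s - l s) (rlim y s - rlim l s)) 0)"

definition RP_xi :: "(real \<Rightarrow> real) \<Rightarrow> (real \<Rightarrow> real) \<Rightarrow> real \<Rightarrow> real" where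
  "RP_xi l y t = y t + RP_kappa l y t"

definition Theta :: "(real \<Rightarrow> real) \<Rightarrow> (real \<Rightarrow> real) \<Rightarrow> (real \<Rightarrow> real) \<Rightarrow> real \<Rightarrow> real" where
  "Theta u l f t = (SUP s\<in>{0..t}.
      min (max (max (f s - u s) (rlim f s - rlim u s)) 0)
          (INF r\<in>{s..t}. max (min (f r - l r) (rlim f r - rlim l r)) (f r - u r)))"

end

theory Submission
  imports Defs
begin


definition dm :: "(real \<Rightarrow> real) \<Rightarrow> real \<Rightarrow> real \<Rightarrow> bool" where
  "dm g a b \<longleftrightarrow> (\<exists>P N. mono_on {a..b} P \<and> mono_on {a..b} N \<and> (\<forall>x\<in>{a..b}. g x = P x - N x))"

lemma chain_mono:
  fixes x :: "nat \<Rightarrow> real"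
  assumes "\<forall>i<n. x i \<le> x (Suc i)" "i \<le> j" "j \<le> n"
  shows "x i \<le> x j"
  using assms(2,3)
proof (induction j)
  case 0 then show ?case by simp
next
  case (Suc j)
  show ?case
  proof (cases "i = Suc j")
    case True then show ?thesis by simp
  next
    case False
    then have "i \<le> j" using Suc by simp
    then have "x i \<le> x j" using Suc by simp
    also have "x j \<le> x (Suc j)" using assms(1) Suc by simp
    finally show ?thesis .
  qed
qed

lemma dm_bv:
  assumes "dm g a b" "a \<le> b"
  shows "bv_on g a b"
proof -
  obtain P N where PN: "mono_on {a..b} P" "mono_on {a..b} N" "\<forall>x\<in>{a..b}. g x = P x - N x"
    using assms(1) unfolding dm_def by blast
  show ?thesis unfolding bv_on_def
  proof (rule exI[of _ "P b - P a + (N b - N a)"], intro allI impI)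
    fix n and x :: "nat \<Rightarrow> real"
    assume H: "a \<le> x 0 \<and> x n \<le> b \<and> (\<forall>i<n. x i \<le> x (Suc i))"
    have xin: "x i \<in> {a..b}" if "i \<le> n" for i
      using chain_mono[of n x 0 i] chain_mono[of n x i n] H that by auto
    have "(\<Sum>i<n. \<bar>g (x (Suc i)) - g (x i)\<bar>) \<le> (\<Sum>i<n. (P (x (Suc i)) - P (x i)) + (N (x (Suc i)) - N (x i)))"
    proof (rule sum_mono)
      fix i assume "i \<in> {..<n}"
      then have i: "i < n" by simp
      have a1: "x i \<in> {a..b}" "x (Suc i) \<in> {a..b}" using xin i by auto
      have le: "x i \<le> x (Suc i)" using H i by auto
      have "P (x i) \<le> P (x (Suc i))" "N (x i) \<le> N (x (Suc i))"
        using PN(1,2) a1 le by (auto simp: mono_on_def)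
      then show "\<bar>g (x (Suc i)) - g (x i)\<bar> \<le> (P (x (Suc i)) - P (x i)) + (N (x (Suc i)) - N (x i))"
        using PN(3) a1 by auto
    qed
    also have "\<dots> = (P (x n) - P (x 0)) + (N (x n) - N (x 0))"
      by (simp add: sum.distrib sum_lessThan_telescope[of "\<lambda>i. P (x i)"] sum_lessThan_telescope[of "\<lambda>i. N (x i)"])
    also have "\<dots> \<le> P b - P a + (N b - N a)"
    proof -
      have "x 0 \<in> {a..b}" "x n \<in> {a..b}" using xin by auto
      then have "P (x n) \<le> P b" "P a \<le> P (x 0)" "N (x n) \<le> N b" "N a \<le> N (x 0)"
        using PN(1,2) assms(2) by (auto simp: mono_on_def)
      then show ?thesis by simp
    qed
    finally show "(\<Sum>i<n. \<bar>g (x (Suc i)) - g (x i)\<bar>) \<le> P b - P a + (N b - N a)" .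
  qed
qed

lemma dm_refl: "dm g a a"
  unfolding dm_def by (rule exI[of _ g], rule exI[of _ "\<lambda>_. 0"]) (auto simp: mono_on_def)

lemma dm_sub:
  assumes "dm g a b" "a \<le> a'" "b' \<le> b"
  shows "dm g a' b'"
proof -
  obtain P N where PN: "mono_on {a..b} P" "mono_on {a..b} N" "\<forall>x\<in>{a..b}. g x = P x - N x"
    using assms(1) unfolding dm_def by blast
  have s: "{a'..b'} \<subseteq> {a..b}" using assms by auto
  show ?thesis unfolding dm_def
    using PN s mono_on_subset[OF PN(1) s] mono_on_subset[OF PN(2) s] by blast
qed

lemma dm_glue:
  assumes "dm g a b" "dm g b c" "a \<le> b" "b \<le> c"
  shows "dm g a c"
proof -
  obtain P1 N1 where 1: "mono_on {a..b} P1" "mono_on {a..b} N1" "\<forall>x\<in>{a..b}. g x = P1 x - N1 x"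
    using assms(1) unfolding dm_def by blast
  obtain P2 N2 where 2: "mono_on {b..c} P2" "mono_on {b..c} N2" "\<forall>x\<in>{b..c}. g x = P2 x - N2 x"
    using assms(2) unfolding dm_def by blast
  define P where "P x = (if x \<le> b then P1 x else P2 x + (P1 b - P2 b))" for x
  define N where "N x = (if x \<le> b then N1 x else N2 x + (N1 b - N2 b))" for x
  have mP: "mono_on {a..c} P"
  proof (rule mono_onI)
    fix r s assume rs: "r \<in> {a..c}" "s \<in> {a..c}" "r \<le> s"
    show "P r \<le> P s"
    proof (cases "s \<le> b")
      case True then show ?thesis using rs 1(1) by (auto simp: P_def mono_on_def)
    next
      case False
      show ?thesis
      proof (cases "r \<le> b")
        case True
        have "P1 r \<le> P1 b" using 1(1) rs True assms by (auto simp: mono_on_def)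
        moreover have "P2 b \<le> P2 s" using 2(1) rs False assms by (auto simp: mono_on_def)
        ultimately show ?thesis using True False by (simp add: P_def)
      next
        case F2: False
        have "P2 r \<le> P2 s" using 2(1) rs F2 False by (auto simp: mono_on_def)
        then show ?thesis using F2 False by (simp add: P_def)
      qed
    qed
  qed
  have mN: "mono_on {a..c} N"
  proof (rule mono_onI)
    fix r s assume rs: "r \<in> {a..c}" "s \<in> {a..c}" "r \<le> s"
    show "N r \<le> N s"
    proof (cases "s \<le> b")
      case True then show ?thesis using rs 1(2) by (auto simp: N_def mono_on_def)
    next
      case False
      show ?thesis
      proof (cases "r \<le> b")
        case True
        have "N1 r \<le> N1 b" using 1(2) rs True assms by (auto simp: mono_on_def)
        moreover have "N2 b \<le> N2 s" using 2(2) rs False assms by (auto simp: mono_on_def)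
        ultimately show ?thesis using True False by (simp add: N_def)
      next
        case F2: False
        have "N2 r \<le> N2 s" using 2(2) rs F2 False by (auto simp: mono_on_def)
        then show ?thesis using F2 False by (simp add: N_def)
      qed
    qed
  qed
  have "\<forall>x\<in>{a..c}. g x = P x - N x"
  proof
    fix x assume x: "x \<in> {a..c}"
    show "g x = P x - N x"
    proof (cases "x \<le> b")
      case True then show ?thesis using 1(3) x by (simp add: P_def N_def)
    next
      case False
      have "g x = P2 x - N2 x" using 2(3) x False by auto
      moreover have "g b = P1 b - N1 b" using 1(3) assms(3) by auto
      moreover have "g b = P2 b - N2 b" using 2(3) assms(4) by auto
      ultimately show ?thesis using False by (simp add: P_def N_def)
    qed
  qed
  then show ?thesis unfolding dm_def using mP mN by blast
qed

lemma dm_open: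
  assumes "a < b" "mono_on {a<..<b} P" "mono_on {a<..<b} N"
    and "\<forall>x\<in>{a<..<b}. \<bar>P x\<bar> \<le> M \<and> \<bar>N x\<bar> \<le> M"
    and "\<forall>x\<in>{a<..<b}. g x = P x - N x"
  shows "dm g a b"
proof -
  define P' where "P' x = (if x = a then - M - \<bar>g a\<bar> else if x = b then M + \<bar>g b\<bar> else P x)" for x
  define N' where "N' x = (if x = a then - M - \<bar>g a\<bar> - g a else if x = b then M + \<bar>g b\<bar> - g b else N x)" for x
  have M0: "0 \<le> M" using assms(1,4) dense[OF assms(1)] by fastforce
  have bP: "\<bar>P x\<bar> \<le> M" "\<bar>N x\<bar> \<le> M" if "x \<in> {a<..<b}" for x using assms(4) that by auto
  have mP: "mono_on {a..b} P'"
  proof (rule mono_onI)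
    fix r s assume rs: "r \<in> {a..b}" "s \<in> {a..b}" "r \<le> s"
    consider "r = a" | "r \<noteq> a \<and> s = b" | "r \<noteq> a \<and> s \<noteq> b" by blast
    then show "P' r \<le> P' s"
    proof cases
      case 1 then show ?thesis using assms(1) rs M0 bP[of s] by (auto simp: P'_def abs_le_iff)
    next
      case 2 then show ?thesis using assms(1) rs M0 bP[of r] by (auto simp: P'_def abs_le_iff)
    next
      case 3
      then have "r \<in> {a<..<b}" "s \<in> {a<..<b}" using rs by auto
      then show ?thesis using 3 assms(1,2) rs by (auto simp: P'_def mono_on_def)
    qed
  qed
  have mN: "mono_on {a..b} N'"
  proof (rule mono_onI)
    fix r s assume rs: "r \<in> {a..b}" "s \<in> {a..b}" "r \<le> s"
    consider "r = a" | "r \<noteq> a \<and> s = b" | "r \<noteq> a \<and> s \<noteq> b" by blast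
    then show "N' r \<le> N' s"
    proof cases
      case 1 then show ?thesis using assms(1) rs M0 bP[of s] by (auto simp: N'_def abs_le_iff)
    next
      case 2 then show ?thesis using assms(1) rs M0 bP[of r] by (auto simp: N'_def abs_le_iff)
    next
      case 3
      then have "r \<in> {a<..<b}" "s \<in> {a<..<b}" using rs by auto
      then show ?thesis using 3 assms(1,3) rs by (auto simp: N'_def mono_on_def)
    qed
  qed
  have "\<forall>x\<in>{a..b}. g x = P' x - N' x"
    using assms(1,5) by (auto simp: P'_def N'_def)
  then show ?thesis unfolding dm_def using mP mN by blast
qed

lemma dm_max:
  assumes "a < b"
    and "\<And>x y. x \<in> {a<..<b} \<Longrightarrow> y \<in> {a<..<b} \<Longrightarrow> x \<le> y \<Longrightarrow> P y \<le> P x"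
    and "\<And>x y. x \<in> {a<..<b} \<Longrightarrow> y \<in> {a<..<b} \<Longrightarrow> x \<le> y \<Longrightarrow> Q x \<le> Q y"
    and "\<forall>x\<in>{a<..<b}. \<bar>P x\<bar> \<le> M \<and> \<bar>Q x\<bar> \<le> M"
    and "\<forall>x\<in>{a<..<b}. g x = max (P x) (Q x)"
  shows "dm g a b"
proof (rule dm_open[OF assms(1), of Q "\<lambda>x. min (Q x - P x) 0" "2*M"])
  show "mono_on {a<..<b} Q" using assms(3) by (auto simp: mono_on_def)
  show "mono_on {a<..<b} (\<lambda>x. min (Q x - P x) 0)"
  proof (rule mono_onI)
    fix r s assume "r \<in> {a<..<b}" "s \<in> {a<..<b}" "r \<le> s"
    then have "P s \<le> P r" "Q r \<le> Q s" using assms(2,3) by auto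
    then show "min (Q r - P r) 0 \<le> min (Q s - P s) 0" by simp
  qed
  show "\<forall>x\<in>{a<..<b}. \<bar>Q x\<bar> \<le> 2 * M \<and> \<bar>min (Q x - P x) 0\<bar> \<le> 2 * M"
    using assms(4) by (auto simp: abs_le_iff)
  show "\<forall>x\<in>{a<..<b}. g x = Q x - min (Q x - P x) 0"
    using assms(5) by auto
qed

lemma local_global:
  fixes Q :: "real \<Rightarrow> real \<Rightarrow> bool"
  assumes T: "0 \<le> T"
    and glue: "\<And>a b c. a \<le> b \<Longrightarrow> b \<le> c \<Longrightarrow> Q a b \<Longrightarrow> Q b c \<Longrightarrow> Q a c"
    and loc: "\<And>c. 0 \<le> c \<Longrightarrow> c \<le> T \<Longrightarrow> \<exists>e>0. \<forall>a b. c - e < a \<longrightarrow> a \<le> b \<longrightarrow> b < c + e \<longrightarrow> 0 \<le> a \<longrightarrow> Q a b"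
  shows "Q 0 T"
proof -
  define S where "S = {x. 0 \<le> x \<and> x \<le> T \<and> Q 0 x}"
  have "Q 0 0" using loc[of 0] T by force
  then have S0: "0 \<in> S" using T by (simp add: S_def)
  have bS: "bdd_above S" unfolding S_def by (rule bdd_aboveI[of _ T]) auto
  define c where "c = Sup S"
  have c0: "0 \<le> c" unfolding c_def using cSup_upper[OF S0 bS] .
  have cT: "c \<le> T" unfolding c_def using S0 by (intro cSup_least) (auto simp: S_def)
  obtain e where e: "e > 0" "\<forall>a b. c - e < a \<longrightarrow> a \<le> b \<longrightarrow> b < c + e \<longrightarrow> 0 \<le> a \<longrightarrow> Q a b"
    using loc[OF c0 cT] by blast
  have "c - e < Sup S" using e(1) c_def by simp
  then obtain x where x: "x \<in> S" "c - e < x" using less_cSup_iff[of S] S0 bS by blast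
  have xc: "x \<le> c" unfolding c_def using cSup_upper[OF x(1) bS] .
  define b where "b = min T (c + e/2)"
  have "Q x b" using e x xc cT c0 by (intro e(2)[rule_format]) (auto simp: b_def S_def)
  moreover have "Q 0 x" "0 \<le> x" using x by (auto simp: S_def)
  moreover have "x \<le> b" using xc cT e(1) by (simp add: b_def)
  ultimately have "Q 0 b" using glue by blast
  then have "b \<in> S" using c0 e(1) T x by (auto simp: S_def b_def)
  then have "b \<le> c" unfolding c_def using cSup_upper bS by blast
  then have "b = T" using e(1) by (auto simp: b_def)
  then show ?thesis using \<open>Q 0 b\<close> by simp
qed




lemma right_near:
  fixes g :: "real \<Rightarrow> real"
  assumes "(g \<longlongrightarrow> L) (at_right c)" "e > 0"
  shows "\<exists>d>0. \<forall>x. c < x \<and> x < c + d \<longrightarrow> \<bar>g x - L\<bar> < e"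
proof -
  have "eventually (\<lambda>x. dist (g x) L < e) (at_right c)" using tendstoD[OF assms] .
  then obtain b where "b > c" "\<forall>y>c. y < b \<longrightarrow> dist (g y) L < e"
    unfolding eventually_at_right_field by blast
  then show ?thesis by (intro exI[of _ "b - c"]) (auto simp: dist_real_def)
qed

lemma left_near:
  fixes g :: "real \<Rightarrow> real"
  assumes "(g \<longlongrightarrow> L) (at_left c)" "e > 0"
  shows "\<exists>d>0. \<forall>x. c - d < x \<and> x < c \<longrightarrow> \<bar>g x - L\<bar> < e"
proof -
  have "eventually (\<lambda>x. dist (g x) L < e) (at_left c)" using tendstoD[OF assms] .
  then obtain b where "b < c" "\<forall>y>b. y < c \<longrightarrow> dist (g y) L < e"
    unfolding eventually_at_left_field by blast
  then show ?thesis by (intro exI[of _ "c - b"]) (auto simp: dist_real_def)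
qed

lemma rlim_tendsto:
  assumes "regulated g" "0 \<le> x"
  shows "(g \<longlongrightarrow> rlim g x) (at_right x)"
proof -
  obtain L where L: "(g \<longlongrightarrow> L) (at_right x)" using assms unfolding regulated_def by blast
  then have "rlim g x = L" unfolding rlim_def by (intro tendsto_Lim) auto
  then show ?thesis using L by simp
qed

lemma rlim_bound:
  assumes "regulated g" "0 \<le> x" "x < b" "\<forall>z. x < z \<and> z < b \<longrightarrow> lo \<le> g z \<and> g z \<le> hi"
  shows "lo \<le> rlim g x \<and> rlim g x \<le> hi"
proof -
  have ev: "eventually (\<lambda>z. lo \<le> g z \<and> g z \<le> hi) (at_right x)"
    using assms(3,4) by (intro eventually_at_rightI[of x b]) auto
  have "lo \<le> rlim g x"
    by (rule tendsto_lowerbound[OF rlim_tendsto[OF assms(1,2)]]) (use ev in \<open>auto elim: eventually_mono\<close>)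
  moreover have "rlim g x \<le> hi"
    by (rule tendsto_upperbound[OF rlim_tendsto[OF assms(1,2)]]) (use ev in \<open>auto elim: eventually_mono\<close>)
  ultimately show ?thesis by simp
qed

lemma regulated_bounded:
  assumes "regulated g" "0 \<le> T"
  shows "\<exists>M. \<forall>x\<in>{0..T}. \<bar>g x\<bar> \<le> M"
proof -
  have "(\<lambda>a b. \<exists>M. \<forall>x\<in>{a..b}. \<bar>g x\<bar> \<le> M) 0 T"
  proof (rule local_global[OF assms(2)])
    fix a b c :: real
    assume "a \<le> b" "b \<le> c" "\<exists>M. \<forall>x\<in>{a..b}. \<bar>g x\<bar> \<le> M" "\<exists>M. \<forall>x\<in>{b..c}. \<bar>g x\<bar> \<le> M"
    then obtain M1 M2 where "\<forall>x\<in>{a..b}. \<bar>g x\<bar> \<le> M1" "\<forall>x\<in>{b..c}. \<bar>g x\<bar> \<le> M2" by blast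
    then have "\<forall>x\<in>{a..c}. \<bar>g x\<bar> \<le> max M1 M2"
      by (metis atLeastAtMost_iff linorder_le_cases max.coboundedI1 max.coboundedI2)
    then show "\<exists>M. \<forall>x\<in>{a..c}. \<bar>g x\<bar> \<le> M" by blast
  next
    fix c :: real assume c: "0 \<le> c" "c \<le> T"
    obtain L2 where L2: "(g \<longlongrightarrow> L2) (at_right c)" using assms c unfolding regulated_def by blast
    obtain d2 where d2: "d2 > 0" "\<forall>x. c < x \<and> x < c + d2 \<longrightarrow> \<bar>g x - L2\<bar> < 1"
      using right_near[OF L2, of 1] by auto
    show "\<exists>e>0. \<forall>a b. c - e < a \<longrightarrow> a \<le> b \<longrightarrow> b < c + e \<longrightarrow> 0 \<le> a \<longrightarrow> (\<exists>M. \<forall>x\<in>{a..b}. \<bar>g x\<bar> \<le> M)"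
    proof (cases "c = 0")
      case True
      show ?thesis
      proof (rule exI[of _ d2], intro conjI allI impI)
        fix a b assume H: "c - d2 < a" "a \<le> b" "b < c + d2" "0 \<le> a"
        have "\<forall>x\<in>{a..b}. \<bar>g x\<bar> \<le> \<bar>L2\<bar> + 1 + \<bar>g c\<bar>"
        proof
          fix x assume x: "x \<in> {a..b}"
          show "\<bar>g x\<bar> \<le> \<bar>L2\<bar> + 1 + \<bar>g c\<bar>"
          proof (cases "x = c")
            case False
            then have "c < x" using x H True by auto
            then have "\<bar>g x - L2\<bar> < 1" using d2 x H by auto
            then show ?thesis by linarith
          qed simp
        qed
        then show "\<exists>M. \<forall>x\<in>{a..b}. \<bar>g x\<bar> \<le> M" by blast
      qed (use d2 in auto)
    next
      case False
      then have cpos: "c > 0" using c by simp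
      obtain L1 where L1: "(g \<longlongrightarrow> L1) (at_left c)" using assms cpos unfolding regulated_def by blast
      obtain d1 where d1: "d1 > 0" "\<forall>x. c - d1 < x \<and> x < c \<longrightarrow> \<bar>g x - L1\<bar> < 1"
        using left_near[OF L1, of 1] by auto
      show ?thesis
      proof (rule exI[of _ "min d1 d2"], intro conjI allI impI)
        fix a b assume H: "c - min d1 d2 < a" "a \<le> b" "b < c + min d1 d2" "0 \<le> a"
        have "\<forall>x\<in>{a..b}. \<bar>g x\<bar> \<le> \<bar>L1\<bar> + \<bar>L2\<bar> + 1 + \<bar>g c\<bar>"
        proof
          fix x assume x: "x \<in> {a..b}"
          consider "x < c" | "x = c" | "x > c" by linarith
          then show "\<bar>g x\<bar> \<le> \<bar>L1\<bar> + \<bar>L2\<bar> + 1 + \<bar>g c\<bar>"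
          proof cases
            case 1
            then have "\<bar>g x - L1\<bar> < 1" using d1 x H by auto
            then show ?thesis by linarith
          next
            case 3
            then have "\<bar>g x - L2\<bar> < 1" using d2 x H by auto
            then show ?thesis by linarith
          qed simp
        qed
        then show "\<exists>M. \<forall>x\<in>{a..b}. \<bar>g x\<bar> \<le> M" by blast
      qed (use d1 d2 in auto)
    qed
  qed
  then show ?thesis by simp
qed

lemma rlim_bounded:
  assumes "regulated g" "0 \<le> T"
  shows "\<exists>M. \<forall>x\<in>{0..T}. \<bar>g x\<bar> \<le> M \<and> \<bar>rlim g x\<bar> \<le> M"
proof -
  obtain M where M: "\<forall>x\<in>{0..T+1}. \<bar>g x\<bar> \<le> M" using regulated_bounded[OF assms(1), of "T+1"] assms by auto
  have "\<bar>rlim g x\<bar> \<le> M" if x: "x \<in> {0..T}" for x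
  proof -
    have "\<forall>z. x < z \<and> z < T + 1 \<longrightarrow> -M \<le> g z \<and> g z \<le> M"
    proof (intro allI impI)
      fix z assume "x < z \<and> z < T + 1"
      then have "z \<in> {0..T+1}" using x by auto
      then have "\<bar>g z\<bar> \<le> M" using M by blast
      then show "-M \<le> g z \<and> g z \<le> M" by (auto simp: abs_le_iff)
    qed
    then have "-M \<le> rlim g x \<and> rlim g x \<le> M" using rlim_bound[OF assms(1), of x "T+1" "-M" M] x by auto
    then show ?thesis by auto
  qed
  then have "\<forall>x\<in>{0..T}. \<bar>g x\<bar> \<le> M \<and> \<bar>rlim g x\<bar> \<le> M" using M by auto
  then show ?thesis by blast
qed




lemma regulated_add:
  assumes "regulated f" "regulated g"
  shows "regulated (\<lambda>t. f t + g t)"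
  using assms unfolding regulated_def by (metis tendsto_add)

lemma rlim_add:
  assumes "regulated f" "regulated g" "0 \<le> x"
  shows "rlim (\<lambda>t. f t + g t) x = rlim f x + rlim g x"
  unfolding rlim_def[of "\<lambda>t. f t + g t"]
  by (rule tendsto_Lim) (auto intro: tendsto_add rlim_tendsto assms)

lemma bdd_helper:
  fixes g :: "real \<Rightarrow> real"
  assumes "\<forall>x\<in>S. \<bar>g x\<bar> \<le> M"
  shows "bdd_above (g ` S)" "bdd_below (g ` S)"
  using assms by (auto intro!: bdd_aboveI2[of _ _ M] bdd_belowI2[of _ "-M"] simp: abs_le_iff)

context
  fixes y l :: "real \<Rightarrow> real"
  assumes ry: "regulated y" and rl: "regulated l"
begin

definition "Gk s = min (min (y s - l s) (rlim y s - rlim l s)) 0"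

lemma Gk_bounded: "0 \<le> T \<Longrightarrow> \<exists>M. \<forall>s\<in>{0..T}. \<bar>Gk s\<bar> \<le> M"
proof -
  assume T: "0 \<le> T"
  obtain M1 where M1: "\<forall>x\<in>{0..T}. \<bar>y x\<bar> \<le> M1 \<and> \<bar>rlim y x\<bar> \<le> M1" using rlim_bounded[OF ry T] by blast
  obtain M2 where M2: "\<forall>x\<in>{0..T}. \<bar>l x\<bar> \<le> M2 \<and> \<bar>rlim l x\<bar> \<le> M2" using rlim_bounded[OF rl T] by blast
  have "\<forall>s\<in>{0..T}. \<bar>Gk s\<bar> \<le> M1 + M2"
  proof
    fix s assume "s \<in> {0..T}"
    then have "\<bar>y s\<bar> \<le> M1" "\<bar>rlim y s\<bar> \<le> M1" "\<bar>l s\<bar> \<le> M2" "\<bar>rlim l s\<bar> \<le> M2" using M1 M2 by auto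
    then show "\<bar>Gk s\<bar> \<le> M1 + M2" unfolding Gk_def by (auto simp: abs_le_iff)
  qed
  then show ?thesis by blast
qed

lemma kappa_eq: "RP_kappa l y t = - (INF s\<in>{0..t}. Gk s)"
  unfolding RP_kappa_def Gk_def by simp

lemma Gk_bdd: "0 \<le> t \<Longrightarrow> bdd_below (Gk ` {0..t})"
proof -
  assume "0 \<le> t"
  then obtain M where "\<forall>s\<in>{0..t}. \<bar>Gk s\<bar> \<le> M" using Gk_bounded by blast
  then show ?thesis by (rule bdd_helper)
qed

lemma kappa_ge: "0 \<le> t \<Longrightarrow> - Gk t \<le> RP_kappa l y t"
  unfolding kappa_eq using cINF_lower[OF Gk_bdd, of t t] by simp

lemma Gk_le: "Gk t \<le> 0" "Gk t \<le> y t - l t" "Gk t \<le> rlim y t - rlim l t"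
  unfolding Gk_def by auto

lemma kappa_nonneg: "0 \<le> t \<Longrightarrow> 0 \<le> RP_kappa l y t"
  using kappa_ge Gk_le(1) by (meson neg_0_le_iff_le order_trans)

lemma kappa_mono: "0 \<le> s \<Longrightarrow> s \<le> t \<Longrightarrow> RP_kappa l y s \<le> RP_kappa l y t"
  unfolding kappa_eq using cINF_superset_mono[of "{0..s}" Gk "{0..t}" Gk] Gk_bdd[of t] by auto

lemma kappa_regulated: "regulated (RP_kappa l y)"
  unfolding regulated_def
proof (intro conjI allI impI)
  fix x :: real assume x: "0 < x"
  have "(RP_kappa l y \<longlongrightarrow> Sup (RP_kappa l y ` ({..<x} \<inter> {0..}))) (at x within ({..<x} \<inter> {0..}))"
    by (rule Lim_left_bound[where K="RP_kappa l y x"]) (auto intro: kappa_mono)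
  moreover have "at x within ({..<x} \<inter> {0..}) = at_left x"
    by (rule at_within_nhd[of x "{0<..}"]) (use x in auto)
  ultimately show "\<exists>L. (RP_kappa l y \<longlongrightarrow> L) (at_left x)" by auto
next
  fix x :: real assume x: "0 \<le> x"
  have "(RP_kappa l y \<longlongrightarrow> Inf (RP_kappa l y ` ({x<..} \<inter> {0..}))) (at x within ({x<..} \<inter> {0..}))"
    by (rule Lim_right_bound[where K=0]) (auto intro: kappa_mono kappa_nonneg)
  moreover have "{x<..} \<inter> {0..} = {x<..}" using x by auto
  ultimately show "\<exists>L. (RP_kappa l y \<longlongrightarrow> L) (at_right x)" by auto
qed

lemma rlim_kappa_ge: "0 \<le> x \<Longrightarrow> RP_kappa l y x \<le> rlim (RP_kappa l y) x"
  using kappa_mono[of x] kappa_mono[of _ "x+1"]  rlim_bound[OF kappa_regulated, of x "x+1" "RP_kappa l y x" "RP_kappa l y (x+1)"]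
  by (smt (verit))

lemma xi_eq: "RP_xi l y = (\<lambda>t. y t + RP_kappa l y t)"
  by (rule ext) (simp add: RP_xi_def)

lemma xi_regulated: "regulated (RP_xi l y)"
  unfolding xi_eq by (rule regulated_add[OF ry kappa_regulated])

lemma xi_ge: "0 \<le> t \<Longrightarrow> l t \<le> RP_xi l y t"
  using kappa_ge[of t] Gk_le(2)[of t] by (simp add: RP_xi_def)

lemma xi_rlim_ge: "0 \<le> t \<Longrightarrow> rlim l t \<le> rlim (RP_xi l y) t"
proof -
  assume t: "0 \<le> t"
  have "rlim (RP_xi l y) t = rlim y t + rlim (RP_kappa l y) t"
    unfolding xi_eq by (rule rlim_add[OF ry kappa_regulated t])
  then show ?thesis using kappa_ge[OF t] Gk_le(3)[of t] rlim_kappa_ge[OF t] by simp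
qed

end




definition Th :: "(real \<Rightarrow> real) \<Rightarrow> (real \<Rightarrow> real) \<Rightarrow> real \<Rightarrow> real" where
  "Th A B t = (SUP s\<in>{0..t}. min (A s) (INF r\<in>{s..t}. B r))"

lemma sup_min_const:
  fixes g :: "real \<Rightarrow> real"
  assumes "S \<noteq> {}" "bdd_above (g ` S)"
  shows "(SUP s\<in>S. min (g s) c) = min (SUP s\<in>S. g s) c"
proof (rule antisym)
  have bm: "bdd_above ((\<lambda>s. min (g s) c) ` S)"
    using assms(2) by (auto simp: bdd_above_def intro: min.coboundedI1 order_trans) 
  show "(SUP s\<in>S. min (g s) c) \<le> min (SUP s\<in>S. g s) c"
  proof (rule cSUP_least[OF assms(1)])
    fix s assume "s \<in> S"
    then have "g s \<le> (SUP s\<in>S. g s)" using cSUP_upper[OF _ assms(2)] by blast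
    then show "min (g s) c \<le> min (SUP s\<in>S. g s) c" by simp
  qed
  show "min (SUP s\<in>S. g s) c \<le> (SUP s\<in>S. min (g s) c)"
  proof (rule ccontr)
    assume "\<not> ?thesis"
    then have h: "(SUP s\<in>S. min (g s) c) < (SUP s\<in>S. g s)" "(SUP s\<in>S. min (g s) c) < c" by auto
    then obtain s where s: "s \<in> S" "(SUP s\<in>S. min (g s) c) < g s" using less_cSUP_iff[OF assms] by blast
    have "min (g s) c \<le> (SUP s\<in>S. min (g s) c)" using cSUP_upper[OF s(1) bm] .
    then show False using s(2) h(2) by linarith
  qed
qed

locale thb =
  fixes A B :: "real \<Rightarrow> real" and M T :: real
  assumes bA: "\<forall>s\<in>{0..T}. \<bar>A s\<bar> \<le> M" and bB: "\<forall>r\<in>{0..T}. \<bar>B r\<bar> \<le> M"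
begin

lemma bB1: "0 \<le> r \<Longrightarrow> r \<le> T \<Longrightarrow> B r \<le> M"
proof -
  assume "0 \<le> r" "r \<le> T"
  then have "\<bar>B r\<bar> \<le> M" using bB by auto
  then show ?thesis by linarith
qed
lemma bB2: "0 \<le> r \<Longrightarrow> r \<le> T \<Longrightarrow> -M \<le> B r"
proof -
  assume "0 \<le> r" "r \<le> T"
  then have "\<bar>B r\<bar> \<le> M" using bB by auto
  then show ?thesis by linarith
qed
lemma bA1: "0 \<le> r \<Longrightarrow> r \<le> T \<Longrightarrow> A r \<le> M"
proof -
  assume "0 \<le> r" "r \<le> T"
  then have "\<bar>A r\<bar> \<le> M" using bA by auto
  then show ?thesis by linarith
qed
lemma bA2: "0 \<le> r \<Longrightarrow> r \<le> T \<Longrightarrow> -M \<le> A r"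
proof -
  assume "0 \<le> r" "r \<le> T"
  then have "\<bar>A r\<bar> \<le> M" using bA by auto
  then show ?thesis by linarith
qed

lemma bddB: "S \<subseteq> {0..T} \<Longrightarrow> bdd_below (B ` S) \<and> bdd_above (B ` S)"
proof -
  assume "S \<subseteq> {0..T}"
  then have h: "\<forall>x\<in>S. \<bar>B x\<bar> \<le> M" using bB by blast
  show ?thesis using bdd_helper[OF h] by simp
qed

lemma bddA: "S \<subseteq> {0..T} \<Longrightarrow> bdd_below (A ` S) \<and> bdd_above (A ` S)"
proof -
  assume "S \<subseteq> {0..T}"
  then have h: "\<forall>x\<in>S. \<bar>A x\<bar> \<le> M" using bA by blast
  show ?thesis using bdd_helper[OF h] by simp
qed

lemma INF_bound: "0 \<le> s \<Longrightarrow> s \<le> t \<Longrightarrow> t \<le> T \<Longrightarrow> \<bar>(INF r\<in>{s..t}. B r)\<bar> \<le> M"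
proof -
  assume st: "0 \<le> s" "s \<le> t" "t \<le> T"
  have bd: "bdd_below (B ` {s..t})" using bddB[of "{s..t}"] st by auto
  have "(INF r\<in>{s..t}. B r) \<le> B s" using st by (intro cINF_lower[OF bd]) auto
  moreover have "B s \<le> M" using bB st by (auto simp: abs_le_iff)
  moreover have "-M \<le> (INF r\<in>{s..t}. B r)" using st by (intro cINF_greatest) (auto intro!: bB2)
  ultimately show ?thesis by auto
qed

lemma h_bound: "0 \<le> s \<Longrightarrow> s \<le> t \<Longrightarrow> t \<le> T \<Longrightarrow> \<bar>min (A s) (INF r\<in>{s..t}. B r)\<bar> \<le> M"
proof -
  assume st: "0 \<le> s" "s \<le> t" "t \<le> T"
  then have "\<bar>A s\<bar> \<le> M" using bA by auto
  then show ?thesis using INF_bound[OF st] by (auto simp: abs_le_iff min_def)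
qed

lemma h_bdd: "0 \<le> t \<Longrightarrow> t \<le> T \<Longrightarrow> S \<subseteq> {0..t} \<Longrightarrow> bdd_above ((\<lambda>s. min (A s) (INF r\<in>{s..t}. B r)) ` S)"
  by (rule bdd_aboveI2[of _ _ M]) (use h_bound in \<open>fastforce simp: abs_le_iff\<close>)

lemma Th_bound: "0 \<le> t \<Longrightarrow> t \<le> T \<Longrightarrow> \<bar>Th A B t\<bar> \<le> M"
proof -
  assume t: "0 \<le> t" "t \<le> T"
  have "Th A B t \<le> M" unfolding Th_def using t h_bound by (intro cSUP_least) (auto simp: abs_le_iff)
  moreover have "min (A t) (INF r\<in>{t..t}. B r) \<le> Th A B t"
    unfolding Th_def using t by (intro cSUP_upper h_bdd) auto
  moreover have "-M \<le> min (A t) (INF r\<in>{t..t}. B r)" using h_bound[of t t] t by (auto simp: abs_le_iff)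
  ultimately show ?thesis by auto
qed

end


context thb begin
lemma Th_split:
  assumes p: "0 \<le> p" "p < t" "t \<le> T"
  shows "Th A B t = max (min (Th A B p) (INF r\<in>{p<..t}. B r)) (SUP s\<in>{p<..t}. min (A s) (INF r\<in>{s..t}. B r))"
proof -
  let ?h = "\<lambda>s t. min (A s) (INF r\<in>{s..t}. B r)"
  let ?I = "INF r\<in>{p<..t}. B r"
  have u: "{0..t} = {0..p} \<union> {p<..t}" using p by auto
  have "Th A B t = max (SUP s\<in>{0..p}. ?h s t) (SUP s\<in>{p<..t}. ?h s t)"
    unfolding Th_def u using p
    by (subst cSUP_union) (auto intro!: h_bdd simp: sup_max)
  moreover have "(SUP s\<in>{0..p}. ?h s t) = (SUP s\<in>{0..p}. min (?h s p) ?I)"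
  proof (rule SUP_cong)
    fix s assume s: "s \<in> {0..p}"
    have u2: "{s..t} = {s..p} \<union> {p<..t}" using s p by auto
    have "(INF r\<in>{s..t}. B r) = min (INF r\<in>{s..p}. B r) ?I"
      unfolding u2 using s p by (subst cINF_union) (auto intro!: bddB[THEN conjunct1] simp: inf_min)
    then show "?h s t = min (?h s p) ?I" by (simp add: min.assoc)
  qed simp
  moreover have "(SUP s\<in>{0..p}. min (?h s p) ?I) = min (Th A B p) ?I"
    unfolding Th_def using p by (intro sup_min_const h_bdd) auto
  ultimately show ?thesis by simp
qed

end


context thb begin
lemma window_dm:
  assumes A0: "\<forall>s\<in>{0..T}. 0 \<le> A s" and B0: "\<forall>r\<in>{0..T}. 0 \<le> B r"
    and ab: "0 \<le> a" "a < b" "b \<le> T"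
    and cases: "(\<forall>s\<in>{a<..<b}. A s = 0) \<or> (\<forall>s\<in>{a<..<b}. \<forall>r\<in>{a<..<b}. A s \<le> B r)"
  shows "dm (Th A B) a b"
proof -
  define P where "P t = min (Th A B a) (INF r\<in>{a<..t}. B r)" for t
  define Q where "Q t = (SUP s\<in>{a<..t}. min (A s) (INF r\<in>{s..t}. B r))" for t
  have eq: "Th A B t = max (P t) (Q t)" if "t \<in> {a<..<b}" for t
    unfolding P_def Q_def using Th_split[of a t] ab that by auto
  have INF0: "0 \<le> (INF r\<in>S. B r)" if "S \<subseteq> {0..T}" "S \<noteq> {}" for S
    using that B0 by (intro cINF_greatest) auto
  have Panti: "P y \<le> P x" if "x \<in> {a<..<b}" "y \<in> {a<..<b}" "x \<le> y" for x y
  proof -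
    have "(INF r\<in>{a<..y}. B r) \<le> (INF r\<in>{a<..x}. B r)"
      using that ab by (intro cINF_superset_mono bddB[THEN conjunct1]) auto
    then show ?thesis unfolding P_def by simp
  qed
  have Pb: "\<bar>P t\<bar> \<le> \<bar>Th A B a\<bar>" if "t \<in> {a<..<b}" for t
  proof -
    have "0 \<le> (INF r\<in>{a<..t}. B r)" using that ab by (intro INF0) auto
    then show ?thesis unfolding P_def by (auto simp: abs_le_iff)
  qed
  have M0: "0 \<le> M" using bA1[of a] bA2[of a] ab by linarith
  from cases show ?thesis
  proof
    assume c1: "\<forall>s\<in>{a<..<b}. A s = 0"
    have "Q t = 0" if t: "t \<in> {a<..<b}" for t
    proof -
      have "Q t = (SUP s\<in>{a<..t}. (0::real))" unfolding Q_def
      proof (rule SUP_cong)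
        fix s assume s: "s \<in> {a<..t}"
        have "0 \<le> (INF r\<in>{s..t}. B r)" using s t ab by (intro INF0) auto
        then show "min (A s) (INF r\<in>{s..t}. B r) = 0" using c1 s t by auto
      qed simp
      then show ?thesis using t by simp
    qed
    moreover have "\<bar>P t\<bar> \<le> max \<bar>Th A B a\<bar> M" if "t \<in> {a<..<b}" for t
      using Pb[OF that] by linarith
    ultimately show ?thesis using eq M0
      by (intro dm_max[OF ab(2), of P "\<lambda>_. 0" "max \<bar>Th A B a\<bar> M"]) (auto intro: Panti)
  next
    assume c2: "\<forall>s\<in>{a<..<b}. \<forall>r\<in>{a<..<b}. A s \<le> B r"
    have Qeq: "Q t = (SUP s\<in>{a<..t}. A s)" if t: "t \<in> {a<..<b}" for t
      unfolding Q_def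
    proof (rule SUP_cong)
      fix s assume s: "s \<in> {a<..t}"
      have "A s \<le> (INF r\<in>{s..t}. B r)" using s t c2 by (intro cINF_greatest) auto
      then show "min (A s) (INF r\<in>{s..t}. B r) = A s" by simp
    qed simp
    have Qmono: "Q x \<le> Q y" if "x \<in> {a<..<b}" "y \<in> {a<..<b}" "x \<le> y" for x y
      unfolding Qeq[OF that(1)] Qeq[OF that(2)] using that ab
      by (intro cSUP_subset_mono bddA[THEN conjunct2]) auto
    have Qb: "\<bar>Q t\<bar> \<le> M" if t: "t \<in> {a<..<b}" for t
    proof -
      have "Q t \<le> M" unfolding Qeq[OF t] using t ab bA by (intro cSUP_least) (auto simp: abs_le_iff)
      moreover have "A t \<le> Q t" unfolding Qeq[OF t] using t ab by (intro cSUP_upper bddA[THEN conjunct2]) auto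
      moreover have "0 \<le> A t" using A0 t ab by auto
      ultimately show ?thesis by auto
    qed
    have "\<bar>P t\<bar> \<le> max \<bar>Th A B a\<bar> M" "\<bar>Q t\<bar> \<le> max \<bar>Th A B a\<bar> M" if "t \<in> {a<..<b}" for t
      using Pb[OF that] Qb[OF that] by linarith+
    then show ?thesis using eq
      by (intro dm_max[OF ab(2), of P Q "max \<bar>Th A B a\<bar> M"]) (auto intro: Panti Qmono)
  qed
qed

end




lemma near_right:
  assumes "regulated g" "0 \<le> c" "\<eta> > 0"
  shows "\<exists>d>0. \<forall>x. c < x \<and> x < c + d \<longrightarrow> \<bar>g x - rlim g c\<bar> \<le> \<eta> \<and> \<bar>rlim g x - rlim g c\<bar> \<le> \<eta>"
proof -
  obtain d where d: "d > 0" "\<forall>x. c < x \<and> x < c + d \<longrightarrow> \<bar>g x - rlim g c\<bar> < \<eta>"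
    using right_near[OF rlim_tendsto[OF assms(1,2)] assms(3)] by blast
  have "\<bar>rlim g x - rlim g c\<bar> \<le> \<eta>" if x: "c < x" "x < c + d" for x
  proof -
    have "\<forall>z. x < z \<and> z < c + d \<longrightarrow> rlim g c - \<eta> \<le> g z \<and> g z \<le> rlim g c + \<eta>"
    proof (intro allI impI)
      fix z assume "x < z \<and> z < c + d"
      then have "\<bar>g z - rlim g c\<bar> < \<eta>" using d x by auto
      then show "rlim g c - \<eta> \<le> g z \<and> g z \<le> rlim g c + \<eta>" by linarith
    qed
    then have "rlim g c - \<eta> \<le> rlim g x \<and> rlim g x \<le> rlim g c + \<eta>"
      using rlim_bound[OF assms(1), of x "c + d"] x assms(2) by auto
    then show ?thesis by linarith
  qed
  then show ?thesis using d by (intro exI[of _ d]) fastforce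
qed

lemma near_left:
  assumes "regulated g" "0 < c" "\<eta> > 0"
  shows "\<exists>L. \<exists>d>0. d \<le> c \<and> (\<forall>x. c - d < x \<and> x < c \<longrightarrow> \<bar>g x - L\<bar> \<le> \<eta> \<and> \<bar>rlim g x - L\<bar> \<le> \<eta>)"
proof -
  obtain L where L: "(g \<longlongrightarrow> L) (at_left c)" using assms unfolding regulated_def by blast
  obtain d0 where d0: "d0 > 0" "\<forall>x. c - d0 < x \<and> x < c \<longrightarrow> \<bar>g x - L\<bar> < \<eta>"
    using left_near[OF L assms(3)] by blast
  define d where "d = min d0 c"
  have d: "d > 0" "d \<le> c" "\<forall>x. c - d < x \<and> x < c \<longrightarrow> \<bar>g x - L\<bar> < \<eta>"
    using d0 assms(2) by (auto simp: d_def)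
  have "\<bar>rlim g x - L\<bar> \<le> \<eta>" if x: "c - d < x" "x < c" for x
  proof -
    have "\<forall>z. x < z \<and> z < c \<longrightarrow> L - \<eta> \<le> g z \<and> g z \<le> L + \<eta>"
    proof (intro allI impI)
      fix z assume "x < z \<and> z < c"
      then have "\<bar>g z - L\<bar> < \<eta>" using d x by auto
      then show "L - \<eta> \<le> g z \<and> g z \<le> L + \<eta>" by linarith
    qed
    moreover have "0 \<le> x" using x d by linarith
    ultimately have "L - \<eta> \<le> rlim g x \<and> rlim g x \<le> L + \<eta>"
      using rlim_bound[OF assms(1), of x c] x by auto
    then show ?thesis by linarith
  qed
  then show ?thesis using d by (intro exI[of _ L] exI[of _ d]) fastforce
qed




lemma theta_bv:
  fixes f l u :: "real \<Rightarrow> real"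
  assumes rf: "regulated f" and rl: "regulated l" and ru: "regulated u"
    and fl: "\<forall>t\<ge>0. l t \<le> f t" and frl: "\<forall>t\<ge>0. rlim l t \<le> rlim f t"
    and gap: "\<forall>t\<ge>0. (INF s\<in>{0..t}. u s - l s) > 0"
  shows "bounded_variation (Theta u l f)"
  unfolding bounded_variation_def
proof (intro allI impI)
  fix T :: real assume T: "0 \<le> T"
  define T1 where "T1 = T + 1"
  have T1: "0 \<le> T1" using T by (simp add: T1_def)
  define Af where "Af s = max (max (f s - u s) (rlim f s - rlim u s)) 0" for s
  define Bf where "Bf r = max (min (f r - l r) (rlim f r - rlim l r)) (f r - u r)" for r
  have ThE: "Theta u l f = Th Af Bf"
    by (rule ext) (simp add: Theta_def Th_def Af_def Bf_def)
  obtain Mf where Mf: "\<forall>x\<in>{0..T1}. \<bar>f x\<bar> \<le> Mf \<and> \<bar>rlim f x\<bar> \<le> Mf" using rlim_bounded[OF rf T1] by blast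
  obtain Ml where Ml: "\<forall>x\<in>{0..T1}. \<bar>l x\<bar> \<le> Ml \<and> \<bar>rlim l x\<bar> \<le> Ml" using rlim_bounded[OF rl T1] by blast
  obtain Mu where Mu: "\<forall>x\<in>{0..T1}. \<bar>u x\<bar> \<le> Mu \<and> \<bar>rlim u x\<bar> \<le> Mu" using rlim_bounded[OF ru T1] by blast
  define M where "M = Mf + Ml + Mu"
  have bA: "\<forall>s\<in>{0..T1}. \<bar>Af s\<bar> \<le> M"
  proof
    fix s assume s: "s \<in> {0..T1}"
    then have "\<bar>f s\<bar> \<le> Mf" "\<bar>rlim f s\<bar> \<le> Mf" "\<bar>l s\<bar> \<le> Ml" "\<bar>rlim l s\<bar> \<le> Ml" "\<bar>u s\<bar> \<le> Mu" "\<bar>rlim u s\<bar> \<le> Mu"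
      using Mf Ml Mu by auto
    then show "\<bar>Af s\<bar> \<le> M" unfolding Af_def M_def by (auto simp: abs_le_iff)
  qed
  have bB: "\<forall>s\<in>{0..T1}. \<bar>Bf s\<bar> \<le> M"
  proof
    fix s assume s: "s \<in> {0..T1}"
    then have "\<bar>f s\<bar> \<le> Mf" "\<bar>rlim f s\<bar> \<le> Mf" "\<bar>l s\<bar> \<le> Ml" "\<bar>rlim l s\<bar> \<le> Ml" "\<bar>u s\<bar> \<le> Mu" "\<bar>rlim u s\<bar> \<le> Mu"
      using Mf Ml Mu by auto
    then show "\<bar>Bf s\<bar> \<le> M" unfolding Bf_def M_def by (auto simp: abs_le_iff)
  qed
  interpret thb Af Bf M T1 using bA bB by unfold_locales
  have A0: "\<forall>s\<in>{0..T1}. 0 \<le> Af s" by (simp add: Af_def)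
  have B0: "\<forall>s\<in>{0..T1}. 0 \<le> Bf s"
  proof
    fix s assume "s \<in> {0..T1}"
    then have "l s \<le> f s" "rlim l s \<le> rlim f s" using fl frl by auto
    then show "0 \<le> Bf s" by (simp add: Bf_def)
  qed
  define \<delta> where "\<delta> = (INF s\<in>{0..T1}. u s - l s)"
  have \<delta>0: "\<delta> > 0" using gap T1 by (simp add: \<delta>_def)
  have bddul: "bdd_below ((\<lambda>s. u s - l s) ` {0..T1})"
  proof (rule bdd_belowI2[where m="- Mu - Ml"])
    fix s assume "s \<in> {0..T1}"
    then have "\<bar>l s\<bar> \<le> Ml" "\<bar>u s\<bar> \<le> Mu" using Ml Mu by auto
    then show "- Mu - Ml \<le> u s - l s" by (auto simp: abs_le_iff)
  qed
  have gapx: "\<delta> \<le> u x - l x" if "x \<in> {0..T1}" for x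
    unfolding \<delta>_def using cINF_lower[OF bddul that] .
  define \<eta> where "\<eta> = \<delta> / 8"
  have \<eta>0: "\<eta> > 0" using \<delta>0 by (simp add: \<eta>_def)
  have W: "dm (Th Af Bf) a0 b0"
    if ab: "0 \<le> a0" "a0 < b0" "b0 \<le> T1"
      and near: "\<forall>x. a0 < x \<and> x < b0 \<longrightarrow>
          \<bar>f x - F\<bar> \<le> \<eta> \<and> \<bar>rlim f x - F\<bar> \<le> \<eta> \<and>
          \<bar>l x - L\<bar> \<le> \<eta> \<and> \<bar>rlim l x - L\<bar> \<le> \<eta> \<and>
          \<bar>u x - U\<bar> \<le> \<eta> \<and> \<bar>rlim u x - U\<bar> \<le> \<eta>"
    for a0 b0 F L U
  proof -
    define xm where "xm = (a0 + b0) / 2"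
    have xm: "a0 < xm" "xm < b0" using ab by (auto simp: xm_def)
    have g1: "\<delta> \<le> u xm - l xm" using gapx xm ab by auto
    have "\<bar>l xm - L\<bar> \<le> \<eta>" "\<bar>u xm - U\<bar> \<le> \<eta>" using near xm by auto
    then have h1: "L - \<eta> \<le> l xm" "u xm \<le> U + \<eta>" by (auto simp: abs_le_iff)
    have "\<delta> = 8 * \<eta>" by (simp add: \<eta>_def)
    then have UL: "6 * \<eta> \<le> U - L" using g1 h1 by linarith
    have "(\<forall>s\<in>{a0<..<b0}. Af s = 0) \<or> (\<forall>s\<in>{a0<..<b0}. \<forall>r\<in>{a0<..<b0}. Af s \<le> Bf r)"
    proof (cases "F < U - 2 * \<eta>")
      case True
      have "Af s = 0" if "s \<in> {a0<..<b0}" for s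
      proof -
        have "\<bar>f s - F\<bar> \<le> \<eta>" "\<bar>rlim f s - F\<bar> \<le> \<eta>" "\<bar>u s - U\<bar> \<le> \<eta>" "\<bar>rlim u s - U\<bar> \<le> \<eta>"
          using near that by auto
        then show ?thesis using True unfolding Af_def by (auto simp: abs_le_iff)
      qed
      then show ?thesis by blast
    next
      case False
      have "Af s \<le> Bf r" if "s \<in> {a0<..<b0}" "r \<in> {a0<..<b0}" for s r
      proof -
        have "\<bar>f s - F\<bar> \<le> \<eta>" "\<bar>rlim f s - F\<bar> \<le> \<eta>" "\<bar>u s - U\<bar> \<le> \<eta>" "\<bar>rlim u s - U\<bar> \<le> \<eta>"
          using near that by auto
        then have "Af s \<le> F - U + 2 * \<eta>" unfolding Af_def using False by (auto simp: abs_le_iff)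
        moreover have "\<bar>f r - F\<bar> \<le> \<eta>" "\<bar>rlim f r - F\<bar> \<le> \<eta>" "\<bar>l r - L\<bar> \<le> \<eta>" "\<bar>rlim l r - L\<bar> \<le> \<eta>"
          using near that by auto
        then have "F - L - 2 * \<eta> \<le> Bf r" unfolding Bf_def by (auto simp: abs_le_iff)
        ultimately show ?thesis using UL \<eta>0 by linarith
      qed
      then show ?thesis by blast
    qed
    then show ?thesis using window_dm[OF A0 B0 ab] by blast
  qed
  have loc: "\<exists>e>0. \<forall>a b. c - e < a \<longrightarrow> a \<le> b \<longrightarrow> b < c + e \<longrightarrow> 0 \<le> a \<longrightarrow> dm (Th Af Bf) a b"
    if c: "0 \<le> c" "c \<le> T" for c
  proof -
    have "\<exists>dR>0. \<forall>b. c < b \<and> b < c + dR \<longrightarrow> dm (Th Af Bf) c b"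
    proof -
      obtain d1 where d1: "d1 > 0" "\<forall>x. c < x \<and> x < c + d1 \<longrightarrow> \<bar>f x - rlim f c\<bar> \<le> \<eta> \<and> \<bar>rlim f x - rlim f c\<bar> \<le> \<eta>"
        using near_right[OF rf c(1) \<eta>0] by blast
      obtain d2 where d2: "d2 > 0" "\<forall>x. c < x \<and> x < c + d2 \<longrightarrow> \<bar>l x - rlim l c\<bar> \<le> \<eta> \<and> \<bar>rlim l x - rlim l c\<bar> \<le> \<eta>"
        using near_right[OF rl c(1) \<eta>0] by blast
      obtain d3 where d3: "d3 > 0" "\<forall>x. c < x \<and> x < c + d3 \<longrightarrow> \<bar>u x - rlim u c\<bar> \<le> \<eta> \<and> \<bar>rlim u x - rlim u c\<bar> \<le> \<eta>"
        using near_right[OF ru c(1) \<eta>0] by blast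
      define d where "d = min 1 (min d1 (min d2 d3))"
      have "d > 0" using d1 d2 d3 by (simp add: d_def)
      moreover have "dm (Th Af Bf) c b" if b: "c < b" "b < c + d" for b
      proof (rule W[of c b "rlim f c" "rlim l c" "rlim u c"])
        show "0 \<le> c" "c < b" using c b by auto
        show "b \<le> T1" using b c by (simp add: d_def T1_def)
        show "\<forall>x. c < x \<and> x < b \<longrightarrow>
          \<bar>f x - rlim f c\<bar> \<le> \<eta> \<and> \<bar>rlim f x - rlim f c\<bar> \<le> \<eta> \<and>
          \<bar>l x - rlim l c\<bar> \<le> \<eta> \<and> \<bar>rlim l x - rlim l c\<bar> \<le> \<eta> \<and>
          \<bar>u x - rlim u c\<bar> \<le> \<eta> \<and> \<bar>rlim u x - rlim u c\<bar> \<le> \<eta>"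
        proof (intro allI impI)
          fix x assume x: "c < x \<and> x < b"
          then have "x < c + d1" "x < c + d2" "x < c + d3" using b by (auto simp: d_def)
          then show "\<bar>f x - rlim f c\<bar> \<le> \<eta> \<and> \<bar>rlim f x - rlim f c\<bar> \<le> \<eta> \<and>
            \<bar>l x - rlim l c\<bar> \<le> \<eta> \<and> \<bar>rlim l x - rlim l c\<bar> \<le> \<eta> \<and>
            \<bar>u x - rlim u c\<bar> \<le> \<eta> \<and> \<bar>rlim u x - rlim u c\<bar> \<le> \<eta>"
            using d1 d2 d3 x by blast
        qed
      qed
      ultimately show ?thesis by blast
    qed
    then obtain dR where dR: "dR > 0" "\<forall>b. c < b \<and> b < c + dR \<longrightarrow> dm (Th Af Bf) c b" by blast
    have "\<exists>dL>0. \<forall>a. c - dL < a \<and> a < c \<and> 0 \<le> a \<longrightarrow> dm (Th Af Bf) a c"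
    proof (cases "c = 0")
      case True then show ?thesis by (intro exI[of _ 1]) auto
    next
      case False
      then have cpos: "0 < c" using c by simp
      obtain F d1 where d1: "d1 > 0" "d1 \<le> c" "\<forall>x. c - d1 < x \<and> x < c \<longrightarrow> \<bar>f x - F\<bar> \<le> \<eta> \<and> \<bar>rlim f x - F\<bar> \<le> \<eta>"
        using near_left[OF rf cpos \<eta>0] by blast
      obtain L d2 where d2: "d2 > 0" "d2 \<le> c" "\<forall>x. c - d2 < x \<and> x < c \<longrightarrow> \<bar>l x - L\<bar> \<le> \<eta> \<and> \<bar>rlim l x - L\<bar> \<le> \<eta>"
        using near_left[OF rl cpos \<eta>0] by blast
      obtain U d3 where d3: "d3 > 0" "d3 \<le> c" "\<forall>x. c - d3 < x \<and> x < c \<longrightarrow> \<bar>u x - U\<bar> \<le> \<eta> \<and> \<bar>rlim u x - U\<bar> \<le> \<eta>"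
        using near_left[OF ru cpos \<eta>0] by blast
      define d where "d = min d1 (min d2 d3)"
      have "d > 0" using d1 d2 d3 by (simp add: d_def)
      moreover have "dm (Th Af Bf) a c" if a: "c - d < a" "a < c" "0 \<le> a" for a
      proof (rule W[of a c F L U])
        show "0 \<le> a" "a < c" using a by auto
        show "c \<le> T1" using c by (simp add: T1_def)
        show "\<forall>x. a < x \<and> x < c \<longrightarrow>
          \<bar>f x - F\<bar> \<le> \<eta> \<and> \<bar>rlim f x - F\<bar> \<le> \<eta> \<and>
          \<bar>l x - L\<bar> \<le> \<eta> \<and> \<bar>rlim l x - L\<bar> \<le> \<eta> \<and>
          \<bar>u x - U\<bar> \<le> \<eta> \<and> \<bar>rlim u x - U\<bar> \<le> \<eta>"
        proof (intro allI impI)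
          fix x assume x: "a < x \<and> x < c"
          then have "c - d1 < x" "c - d2 < x" "c - d3 < x" using a by (auto simp: d_def)
          then show "\<bar>f x - F\<bar> \<le> \<eta> \<and> \<bar>rlim f x - F\<bar> \<le> \<eta> \<and>
            \<bar>l x - L\<bar> \<le> \<eta> \<and> \<bar>rlim l x - L\<bar> \<le> \<eta> \<and>
            \<bar>u x - U\<bar> \<le> \<eta> \<and> \<bar>rlim u x - U\<bar> \<le> \<eta>"
            using d1 d2 d3 x by blast
        qed
      qed
      ultimately show ?thesis by blast
    qed
    then obtain dL where dL: "dL > 0" "\<forall>a. c - dL < a \<and> a < c \<and> 0 \<le> a \<longrightarrow> dm (Th Af Bf) a c" by blast
    show ?thesis
    proof (rule exI[of _ "min dL dR"], intro conjI allI impI)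
      show "0 < min dL dR" using dL dR by simp
      fix a b assume H: "c - min dL dR < a" "a \<le> b" "b < c + min dL dR" "0 \<le> a"
      have 1: "dm (Th Af Bf) (min a c) c"
      proof (cases "a < c")
        case True then show ?thesis using dL H by auto
      next
        case False then show ?thesis by (simp add: dm_refl)
      qed
      have 2: "dm (Th Af Bf) c (max b c)"
      proof (cases "c < b")
        case True then show ?thesis using dR H by auto
      next
        case False then show ?thesis by (simp add: dm_refl)
      qed
      have "dm (Th Af Bf) (min a c) (max b c)" by (rule dm_glue[OF 1 2]) auto
      then show "dm (Th Af Bf) a b" by (rule dm_sub) (use H in auto)
    qed
  qed
  have "dm (Th Af Bf) 0 T"
  proof (rule local_global[OF T])
    show "\<And>a b c. a \<le> b \<Longrightarrow> b \<le> c \<Longrightarrow> dm (Th Af Bf) a b \<Longrightarrow> dm (Th Af Bf) b c \<Longrightarrow> dm (Th Af Bf) a c"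
      using dm_glue by blast
    show "\<And>c. 0 \<le> c \<Longrightarrow> c \<le> T \<Longrightarrow> \<exists>e>0. \<forall>a b. c - e < a \<longrightarrow> a \<le> b \<longrightarrow> b < c + e \<longrightarrow> 0 \<le> a \<longrightarrow> dm (Th Af Bf) a b"
      using loc by blast
  qed
  then show "bv_on (Theta u l f) 0 T" unfolding ThE using dm_bv T by blast
qed



theorem lemma2:
  fixes y l u :: "real \<Rightarrow> real"
  assumes "regulated y" and "regulated l" and "regulated u"
    and "\<forall>t\<ge>0. l t \<le> u t"
    and "l 0 \<le> y 0" and "y 0 \<le> u 0"
    and "\<forall>t\<ge>0. (INF s\<in>{0..t}. u s - l s) > 0"
  shows "bounded_variation (Theta u l (RP_xi l y))"
proof (rule theta_bv)
  show "regulated (RP_xi l y)" using xi_regulated assms(1,2) by blast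
  show "regulated l" "regulated u" using assms by auto
  show "\<forall>t\<ge>0. l t \<le> RP_xi l y t" using xi_ge assms(1,2) by blast
  show "\<forall>t\<ge>0. rlim l t \<le> rlim (RP_xi l y) t" using xi_rlim_ge assms(1,2) by blast
  show "\<forall>t\<ge>0. (INF s\<in>{0..t}. u s - l s) > 0" using assms(7) .
qed

end
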